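(* Let $\mathbf{X}$ be a finitely supported real random variable with $\mathbf{E}[\mathbf{X}]=0$ and $\mathrm{Var}[\mathbf{X}]=1$. There exists a constant $K=K_{\mathbf{X}}$ such that the following holds: let $f:\mathbb{R}^n\to\mathbb{R}$ be a multilinear polynomial of degree at most $d$ with $\sum_{i=1}^n\widehat{f}(\{i\})^2\ge1$. Let $t\ge1$ and suppose $|\widehat{f}(\{i\})|\le 1/(Ktd)$ for all $i\in[n]$. Then \[ \Pr_{\mathbf{x}\sim\mathbf{X}^{\otimes n}}\big[|f(\mathbf{x})|\ge t\big]\ge\exp\big(-O_{\mathbf{X}}(t^2d^2)\big). \]
   Context: A multilinear polynomial is written $f(x)=\sum_{S\subseteq[n]}\widehat{f}(S)\prod_{i\in S}x_i$; $\mathbf{X}^{\otimes n}$ is a vector of $n$ i.i.d. copies of $\mathbf{X}$. *)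

theory Defs
  imports "HOL-Probability.Probability"
begin

definition mlpoly :: "nat \<Rightarrow> (nat set \<Rightarrow> real) \<Rightarrow> (nat \<Rightarrow> real) \<Rightarrow> real" where
  "mlpoly n fhat x = (\<Sum>S\<in>Pow {..<n}. fhat S * (\<Prod>i\<in>S. x i))"

definition mldegree_le :: "nat \<Rightarrow> (nat set \<Rightarrow> real) \<Rightarrow> nat \<Rightarrow> bool" where
  "mldegree_le n fhat d \<longleftrightarrow> (\<forall>S\<in>Pow {..<n}. fhat S \<noteq> 0 \<longrightarrow> card S \<le> d)"

end

theory Submission
  imports Defs "HOL-Analysis.Analysis" "HOL-Computational_Algebra.Polynomial"
begin


definition DD :: "nat \<Rightarrow> real set \<Rightarrow> (nat \<Rightarrow> real) set" where
  "DD n V = PiE_dflt {..<n} 0 (\<lambda>_. V)"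

definition Exn :: "real pmf \<Rightarrow> nat \<Rightarrow> ((nat \<Rightarrow> real) \<Rightarrow> real) \<Rightarrow> real" where
  "Exn X n F = (\<Sum>x\<in>DD n (set_pmf X). (\<Prod>i<n. pmf X (x i)) * F x)"

definition E1 :: "real pmf \<Rightarrow> (real \<Rightarrow> real) \<Rightarrow> real" where
  "E1 X h = (\<Sum>y\<in>set_pmf X. pmf X y * h y)"

lemma finite_DD: "finite V \<Longrightarrow> finite (DD n V)"
  unfolding DD_def by (intro finite_PiE_dflt) auto

lemma DD_0: "DD 0 V = {\<lambda>_. 0}"
  unfolding DD_def PiE_dflt_def by auto

lemma Ex_0: "Exn X 0 F = F (\<lambda>_. 0)"
  unfolding Exn_def DD_0 by simp

lemma DD_Suc: "DD (Suc n) V = (\<lambda>(y,x). x(n:=y)) ` (V \<times> DD n V)"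
proof (intro equalityI subsetI)
  fix z assume z: "z \<in> DD (Suc n) V"
  have "z = (\<lambda>(y,x). x(n:=y)) (z n, z(n:=0))" by auto
  moreover have "(z n, z(n:=0)) \<in> V \<times> DD n V"
    using z unfolding DD_def PiE_dflt_def by auto
  ultimately show "z \<in> (\<lambda>(y,x). x(n:=y)) ` (V \<times> DD n V)" by blast
next
  fix z assume "z \<in> (\<lambda>(y,x). x(n:=y)) ` (V \<times> DD n V)"
  then show "z \<in> DD (Suc n) V" unfolding DD_def PiE_dflt_def by auto
qed

lemma inj_DD_Suc: "inj_on (\<lambda>(y,x). x(n:=y)) (V \<times> DD n V)"
proof (rule inj_onI, clarify)
  fix y x y' x' assume A: "y \<in> V" "x \<in> DD n V" "y' \<in> V" "x' \<in> DD n V"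
    and eq: "x(n := y) = x'(n := y')"
  have "y = y'" using fun_cong[OF eq, of n] by simp
  moreover have "x = x'"
  proof
    fix i show "x i = x' i"
    proof (cases "i = n")
      case True then show ?thesis using A unfolding DD_def PiE_dflt_def by auto
    next
      case False then show ?thesis using fun_cong[OF eq, of i] by simp
    qed
  qed
  ultimately show "y = y' \<and> x = x'" by simp
qed

lemma prod_upd_Suc: "(\<Prod>i<Suc n. g ((x(n:=y)) i)) = g y * (\<Prod>i<n. g (x i))"
proof -
  have "(\<Prod>i<n. g ((x(n:=y)) i)) = (\<Prod>i<n. g (x i))"
    by (intro prod.cong) auto
  then show ?thesis by (simp add: lessThan_Suc mult.commute)
qed

lemma Ex_Suc:
  assumes "finite (set_pmf X)"
  shows "Exn X (Suc n) F = (\<Sum>y\<in>set_pmf X. pmf X y * Exn X n (\<lambda>x. F (x(n:=y))))"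
proof -
  let ?V = "set_pmf X"
  have "Exn X (Suc n) F = (\<Sum>z\<in>(\<lambda>(y,x). x(n:=y)) ` (?V \<times> DD n ?V). (\<Prod>i<Suc n. pmf X (z i)) * F z)"
    unfolding Exn_def DD_Suc ..
  also have "\<dots> = (\<Sum>(y,x)\<in>?V \<times> DD n ?V. (\<Prod>i<Suc n. pmf X ((x(n:=y)) i)) * F (x(n:=y)))"
    by (subst sum.reindex[OF inj_DD_Suc]) (simp add: case_prod_unfold)
  also have "\<dots> = (\<Sum>y\<in>?V. \<Sum>x\<in>DD n ?V. (\<Prod>i<Suc n. pmf X ((x(n:=y)) i)) * F (x(n:=y)))"
    by (subst sum.cartesian_product) simp
  also have "\<dots> = (\<Sum>y\<in>?V. pmf X y * Exn X n (\<lambda>x. F (x(n:=y))))"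
    unfolding Exn_def sum_distrib_left
    by (intro sum.cong refl) (simp add: prod_upd_Suc mult_ac)
  finally show ?thesis .
qed

lemma Ex_add: "Exn X n (\<lambda>x. F x + G x) = Exn X n F + Exn X n G"
  unfolding Exn_def by (simp add: sum.distrib distrib_left)

lemma Ex_diff: "Exn X n (\<lambda>x. F x - G x) = Exn X n F - Exn X n G"
  unfolding Exn_def by (simp add: sum_subtractf right_diff_distrib)

lemma Ex_cmult: "Exn X n (\<lambda>x. c * F x) = c * Exn X n F"
  unfolding Exn_def by (simp add: sum_distrib_left mult_ac)

lemma Ex_sum: "Exn X n (\<lambda>x. \<Sum>S\<in>A. G S x) = (\<Sum>S\<in>A. Exn X n (G S))"
  unfolding Exn_def by (simp add: sum_distrib_left sum.swap[of _ A])

lemma weight_nonneg: "0 \<le> (\<Prod>i<n. pmf X (x i))"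
  by (intro prod_nonneg) auto

lemma Ex_mono:
  assumes "\<And>x. x \<in> DD n (set_pmf X) \<Longrightarrow> F x \<le> G x"
  shows "Exn X n F \<le> Exn X n G"
  unfolding Exn_def by (intro sum_mono mult_left_mono assms weight_nonneg)

lemma Ex_cong:
  assumes "\<And>x. x \<in> DD n (set_pmf X) \<Longrightarrow> F x = G x"
  shows "Exn X n F = Exn X n G"
  unfolding Exn_def using assms by (intro sum.cong) auto

lemma Ex_nonneg:
  assumes "\<And>x. x \<in> DD n (set_pmf X) \<Longrightarrow> 0 \<le> F x"
  shows "0 \<le> Exn X n F"
  using Ex_mono[of n X "\<lambda>_. 0" F] assms by (simp add: Exn_def)

lemma prod_upd_Suc': "(\<Prod>i<Suc n. h i ((x(n:=y)) i)) = h n y * (\<Prod>i<n. h i (x i))"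
proof -
  have "(\<Prod>i<n. h i ((x(n:=y)) i)) = (\<Prod>i<n. h i (x i))"
    by (intro prod.cong) auto
  then show ?thesis by (simp add: lessThan_Suc mult.commute)
qed

lemma Ex_prod:
  assumes "finite (set_pmf X)"
  shows "Exn X n (\<lambda>x. \<Prod>i<n. h i (x i)) = (\<Prod>i<n. E1 X (h i))"
proof (induction n)
  case 0 then show ?case by (simp add: Ex_0)
next
  case (Suc n)
  have "Exn X (Suc n) (\<lambda>x. \<Prod>i<Suc n. h i (x i)) =
        (\<Sum>y\<in>set_pmf X. pmf X y * Exn X n (\<lambda>x. h n y * (\<Prod>i<n. h i (x i))))"
    unfolding Ex_Suc[OF assms] prod_upd_Suc' ..
  also have "\<dots> = (\<Sum>y\<in>set_pmf X. pmf X y * h n y) * (\<Prod>i<n. E1 X (h i))"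
    unfolding Ex_cmult Suc.IH by (simp add: sum_distrib_left mult_ac)
  also have "\<dots> = (\<Prod>i<Suc n. E1 X (h i))"
    by (simp add: E1_def lessThan_Suc mult.commute)
  finally show ?case .
qed

lemma E1_one: "finite (set_pmf X) \<Longrightarrow> E1 X (\<lambda>_. 1) = 1"
  unfolding E1_def by (simp add: sum_pmf_eq_1)

lemma Ex_one: "finite (set_pmf X) \<Longrightarrow> Exn X n (\<lambda>_. 1) = 1"
  using Ex_prod[of X n "\<lambda>_ _. 1"] by (simp add: E1_one)

lemma Ex_const: "finite (set_pmf X) \<Longrightarrow> Exn X n (\<lambda>_. c) = c"
  using Ex_cmult[of X n c "\<lambda>_. 1"] Ex_one[of X n] by simp

lemma prob_Ex:
  assumes "finite (set_pmf X)"
  shows "measure_pmf.prob (Pi_pmf {..<n} 0 (\<lambda>_. X)) A = Exn X n (indicator A)"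
proof -
  let ?P = "Pi_pmf {..<n} 0 (\<lambda>_. X)"
  have sp: "set_pmf ?P = DD n (set_pmf X)"
    unfolding DD_def by (subst set_Pi_pmf) (auto simp: o_def)
  have fin: "finite (set_pmf ?P)" using sp finite_DD[OF assms] by simp
  have "measure_pmf.prob ?P A = measure_pmf.prob ?P (A \<inter> set_pmf ?P)"
    by (simp add: measure_Int_set_pmf)
  also have "\<dots> = sum (pmf ?P) (A \<inter> set_pmf ?P)"
    using fin by (intro measure_measure_pmf_finite) auto
  also have "\<dots> = sum (pmf ?P) (set_pmf ?P \<inter> A)"
    by (simp add: Int_commute)
  also have "\<dots> = (\<Sum>x\<in>set_pmf ?P. if x \<in> A then pmf ?P x else 0)"
    by (rule sum.inter_restrict[OF fin])
  also have "\<dots> = (\<Sum>x\<in>set_pmf ?P. pmf ?P x * indicator A x)"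
    by (intro sum.cong) (auto simp: indicator_def)
  also have "\<dots> = Exn X n (indicator A)"
    unfolding Exn_def sp
  proof (intro sum.cong refl)
    fix x assume "x \<in> DD n (set_pmf X)"
    then have "pmf ?P x = (\<Prod>i<n. pmf X (x i))"
      by (subst pmf_Pi) (auto simp: DD_def PiE_dflt_def)
    then show "pmf ?P x * indicator A x = (\<Prod>i<n. pmf X (x i)) * indicator A x" by simp
  qed
  finally show ?thesis .
qed

lemma mono_as_prod:
  fixes n :: nat and x :: "nat \<Rightarrow> real"
  assumes "S \<subseteq> {..<n}"
  shows "(\<Prod>i\<in>S. x i) = (\<Prod>i<n. if i \<in> S then x i else 1)"
proof -
  have "(\<Prod>i<n. if i \<in> S then x i else 1) = prod x ({..<n} \<inter> S)"
    by (rule prod.inter_restrict[symmetric]) simp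
  also have "{..<n} \<inter> S = S" using assms by auto
  finally show ?thesis by simp
qed

locale rvX =
  fixes X :: "real pmf"
  assumes finX: "finite (set_pmf X)"
    and m1: "E1 X (\<lambda>y. y) = 0"
    and m2: "E1 X (\<lambda>y. y^2) = 1"
begin

lemma E1_add: "E1 X (\<lambda>y. f y + g y) = E1 X f + E1 X g"
  by (simp add: E1_def distrib_left sum.distrib)

lemma E1_cmult: "E1 X (\<lambda>y. c * f y) = c * E1 X f"
  by (simp add: E1_def sum_distrib_left mult.left_commute)

lemma E1_const: "E1 X (\<lambda>y. c) = c"
  using E1_cmult[of c "\<lambda>_. 1"] E1_one[OF finX] by simp

lemma E1_lin: "E1 X (\<lambda>y. a * y + b) = b"
  using E1_add[of "\<lambda>y. a * y" "\<lambda>y. b"] E1_cmult[of a "\<lambda>y. y"] m1 E1_const[of b]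
  by simp

lemma E1_quad: "E1 X (\<lambda>y. a * y^2 + b * y + c) = a + c"
  using E1_add[of "\<lambda>y. a * y^2 + b * y" "\<lambda>y. c"] E1_add[of "\<lambda>y. a * y^2" "\<lambda>y. b * y"]
    E1_cmult[of a "\<lambda>y. y^2"] E1_cmult[of b "\<lambda>y. y"] m1 m2 E1_const[of c]
  by simp

lemma Ex_mono_prod:
  assumes "S \<subseteq> {..<n}" "T \<subseteq> {..<n}"
  shows "Exn X n (\<lambda>x. (\<Prod>i\<in>S. x i) * (\<Prod>i\<in>T. x i)) = (if S = T then 1 else 0)"
proof -
  define h where "h i y = (if i \<in> S then y else 1) * (if i \<in> T then y else (1::real))" for i y
  have "Exn X n (\<lambda>x. (\<Prod>i\<in>S. x i) * (\<Prod>i\<in>T. x i)) = Exn X n (\<lambda>x. \<Prod>i<n. h i (x i))"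
    unfolding mono_as_prod[OF assms(1)] mono_as_prod[OF assms(2)] h_def prod.distrib ..
  also have "\<dots> = (\<Prod>i<n. E1 X (h i))" by (rule Ex_prod[OF finX])
  also have "\<dots> = (\<Prod>i<n. if (i \<in> S) = (i \<in> T) then 1 else 0)"
  proof (intro prod.cong refl)
    fix i
    show "E1 X (h i) = (if (i \<in> S) = (i \<in> T) then 1 else 0)"
    proof -
      have hi: "h i = (\<lambda>y. (if i \<in> S then y else 1) * (if i \<in> T then y else 1))"
        by (simp add: fun_eq_iff h_def)
      have a: "E1 X (\<lambda>y. y * y) = 1" using E1_quad[of 1 0 0] by (simp add: power2_eq_square)
      have b: "E1 X (\<lambda>y. y) = 0" using E1_lin[of 1 0] by simp
      have c: "E1 X (\<lambda>y. 1) = 1" using E1_lin[of 0 1] by simp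
      show ?thesis unfolding hi using a b c
        by (cases "i \<in> S"; cases "i \<in> T") simp_all
    qed
  qed
  also have "\<dots> = (if S = T then 1 else 0)"
  proof (cases "S = T")
    case True then show ?thesis by simp
  next
    case False
    then obtain i where i: "(i \<in> S) \<noteq> (i \<in> T)" by blast
    then have "i \<in> S \<or> i \<in> T" by auto
    then have "i < n" using assms by auto
    have "(\<Prod>i<n. if (i \<in> S) = (i \<in> T) then 1 else 0) = (0::real)"
    proof (rule prod_zero)
      show "\<exists>a\<in>{..<n}. (if (a \<in> S) = (a \<in> T) then 1 else 0) = (0::real)"
      proof (rule bexI[of _ i])
        show "(if (i \<in> S) = (i \<in> T) then 1 else 0) = (0::real)" using i by simp
      qed (use \<open>i < n\<close> in simp)
    qed simp
    then show ?thesis using False by simp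
  qed
  finally show ?thesis .
qed

lemma Ex_mono_tilt:
  assumes "S \<subseteq> {..<n}"
  shows "Exn X n (\<lambda>x. (\<Prod>i\<in>S. x i) * (\<Prod>i<n. 1 + \<mu> i * x i)) = (\<Prod>i\<in>S. \<mu> i)"
proof -
  define h where "h i y = (if i \<in> S then y else 1) * (1 + \<mu> i * y)" for i y
  have "Exn X n (\<lambda>x. (\<Prod>i\<in>S. x i) * (\<Prod>i<n. 1 + \<mu> i * x i)) = Exn X n (\<lambda>x. \<Prod>i<n. h i (x i))"
    unfolding mono_as_prod[OF assms(1)] h_def prod.distrib ..
  also have "\<dots> = (\<Prod>i<n. E1 X (h i))" by (rule Ex_prod[OF finX])
  also have "\<dots> = (\<Prod>i<n. if i \<in> S then \<mu> i else 1)"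
  proof (intro prod.cong refl)
    fix i
    show "E1 X (h i) = (if i \<in> S then \<mu> i else 1)"
    proof (cases "i \<in> S")
      case True
      then have "h i = (\<lambda>y. \<mu> i * y^2 + 1 * y + 0)"
        unfolding h_def fun_eq_iff by (simp add: power2_eq_square distrib_left)
      then show ?thesis using True E1_quad[of "\<mu> i" 1 0] by (simp only:) simp
    next
      case False
      then have "h i = (\<lambda>y. \<mu> i * y + 1)"
        unfolding h_def fun_eq_iff by simp
      then show ?thesis using False E1_lin[of "\<mu> i" 1] by simp
    qed
  qed
  also have "\<dots> = (\<Prod>i\<in>S. \<mu> i)" by (rule mono_as_prod[OF assms, of \<mu>, symmetric])
  finally show ?thesis .
qed

lemma Ex_tilt_one: "Exn X n (\<lambda>x. \<Prod>i<n. 1 + \<mu> i * x i) = 1"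
proof -
  have "Exn X n (\<lambda>x. (\<Prod>i\<in>{}. x i) * (\<Prod>i<n. 1 + \<mu> i * x i)) = (\<Prod>i\<in>{}. \<mu> i)"
    by (rule Ex_mono_tilt) simp
  then show ?thesis by (simp only: prod.empty mult_1_left)
qed

lemma Ex_tilt_pow4: "Exn X n (\<lambda>x. (\<Prod>i<n. 1 + \<mu> i * x i)^4) = (\<Prod>i<n. E1 X (\<lambda>y. (1 + \<mu> i * y)^4))"
  unfolding prod_power_distrib by (rule Ex_prod[OF finX])

end


lemma Ex_CS: "(Exn X n (\<lambda>x. F x * G x))^2 \<le> Exn X n (\<lambda>x. (F x)^2) * Exn X n (\<lambda>x. (G x)^2)"
proof -
  let ?w = "\<lambda>x. (\<Prod>i<n. pmf X (x i))"
  have w: "sqrt (?w x) * sqrt (?w x) = ?w x" for x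
    using weight_nonneg[where n=n and X=X and x=x] by simp
  have e1: "(Exn X n (\<lambda>x. F x * G x)) = (\<Sum>x\<in>DD n (set_pmf X). (sqrt (?w x) * F x) * (sqrt (?w x) * G x))"
    unfolding Exn_def
  proof (intro sum.cong refl)
    fix x
    have "sqrt (?w x) * F x * (sqrt (?w x) * G x) = (sqrt (?w x) * sqrt (?w x)) * (F x * G x)"
      by (simp only: mult_ac)
    then show "?w x * (F x * G x) = sqrt (?w x) * F x * (sqrt (?w x) * G x)" by (simp only: w)
  qed
  have e2: "Exn X n (\<lambda>x. (F x)^2) = (\<Sum>x\<in>DD n (set_pmf X). (sqrt (?w x) * F x)^2)"
    unfolding Exn_def by (intro sum.cong refl) (simp add: power_mult_distrib weight_nonneg)
  have e3: "Exn X n (\<lambda>x. (G x)^2) = (\<Sum>x\<in>DD n (set_pmf X). (sqrt (?w x) * G x)^2)"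
    unfolding Exn_def by (intro sum.cong refl) (simp add: power_mult_distrib weight_nonneg)
  show ?thesis unfolding e1 e2 e3 by (rule Cauchy_Schwarz_ineq_sum)
qed

lemma sum_Pow_Suc:
  "(\<Sum>S\<in>Pow {..<Suc n}. g S) = (\<Sum>S\<in>Pow {..<n}. g S) + (\<Sum>S\<in>Pow {..<n}. g (insert n S))"
proof -
  have "Pow {..<Suc n} = Pow {..<n} \<union> insert n ` Pow {..<n}"
    by (simp add: lessThan_Suc Pow_insert)
  moreover have "Pow {..<n} \<inter> insert n ` Pow {..<n} = {}"
  proof (rule equals0I)
    fix S assume "S \<in> Pow {..<n} \<inter> insert n ` Pow {..<n}"
    then have "n \<in> S" "S \<subseteq> {..<n}" by auto
    then show False by auto
  qed
  moreover have "inj_on (insert n) (Pow {..<n})"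
  proof (rule inj_onI)
    fix S T assume a: "S \<in> Pow {..<n}" "T \<in> Pow {..<n}" and b: "insert n S = insert n T"
    from a have "n \<notin> S" "n \<notin> T" by auto
    then show "S = T" using b by (simp add: insert_ident)
  qed
  ultimately show ?thesis
    by (simp add: sum.union_disjoint sum.reindex)
qed

lemma mlpoly_Suc:
  "mlpoly (Suc n) f (x(n:=y)) = y * mlpoly n (\<lambda>S. f (insert n S)) x + mlpoly n f x"
proof -
  have a: "(\<Prod>i\<in>S. (x(n:=y)) i) = (\<Prod>i\<in>S. x i)" if "S \<in> Pow {..<n}" for S
    using that by (intro prod.cong) auto
  have b: "(\<Prod>i\<in>insert n S. (x(n:=y)) i) = y * (\<Prod>i\<in>S. x i)" if "S \<in> Pow {..<n}" for S
  proof -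
    have "finite S" "n \<notin> S" using that finite_subset by auto
    then show ?thesis using a[OF that] by simp
  qed
  have 1: "(\<Sum>S\<in>Pow {..<n}. f S * (\<Prod>i\<in>S. (x(n:=y)) i)) = mlpoly n f x"
    unfolding mlpoly_def by (rule sum.cong[OF refl]) (metis a)
  have 2: "(\<Sum>S\<in>Pow {..<n}. f (insert n S) * (\<Prod>i\<in>insert n S. (x(n:=y)) i)) = y * mlpoly n (\<lambda>S. f (insert n S)) x"
    unfolding mlpoly_def sum_distrib_left by (rule sum.cong[OF refl]) (metis b mult.left_commute)
  show ?thesis unfolding mlpoly_def[of "Suc n"] sum_Pow_Suc 1 2 by simp
qed

definition NB :: "real \<Rightarrow> nat \<Rightarrow> (nat set \<Rightarrow> real) \<Rightarrow> real" where
  "NB \<beta> n f = (\<Sum>S\<in>Pow {..<n}. \<beta> ^ card S * (f S)^2)"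

lemma NB_Suc: "NB \<beta> (Suc n) f = \<beta> * NB \<beta> n (\<lambda>S. f (insert n S)) + NB \<beta> n f"
proof -
  have c: "\<beta> ^ card (insert n S) = \<beta> * \<beta> ^ card S" if "S \<in> Pow {..<n}" for S
  proof -
    have "finite S" "n \<notin> S" using that finite_subset by auto
    then show ?thesis by simp
  qed
  have "(\<Sum>S\<in>Pow {..<n}. \<beta> ^ card (insert n S) * (f (insert n S))^2) = \<beta> * NB \<beta> n (\<lambda>S. f (insert n S))"
    unfolding NB_def sum_distrib_left by (rule sum.cong[OF refl]) (simp add: c)
  then show ?thesis unfolding NB_def sum_Pow_Suc by simp
qed

lemma NB_nonneg: "0 \<le> \<beta> \<Longrightarrow> 0 \<le> NB \<beta> n f"
  unfolding NB_def by (intro sum_nonneg mult_nonneg_nonneg) auto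

context rvX
begin

lemma Parseval: "Exn X n (\<lambda>x. (mlpoly n f x)^2) = (\<Sum>S\<in>Pow {..<n}. (f S)^2)"
proof -
  have "Exn X n (\<lambda>x. (mlpoly n f x)^2) =
      Exn X n (\<lambda>x. \<Sum>S\<in>Pow {..<n}. \<Sum>T\<in>Pow {..<n}. (f S * f T) * ((\<Prod>i\<in>S. x i) * (\<Prod>i\<in>T. x i)))"
    unfolding mlpoly_def power2_eq_square sum_product by (simp add: mult_ac)
  also have "\<dots> = (\<Sum>S\<in>Pow {..<n}. \<Sum>T\<in>Pow {..<n}. (f S * f T) * (if S = T then 1 else 0))"
    unfolding Ex_sum Ex_cmult by (intro sum.cong refl) (simp add: Ex_mono_prod)
  also have "\<dots> = (\<Sum>S\<in>Pow {..<n}. (f S)^2)"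
  proof (rule sum.cong[OF refl])
    fix S assume S: "S \<in> Pow {..<n}"
    have "(\<Sum>T\<in>Pow {..<n}. (f S * f T) * (if S = T then 1 else 0)) =
          (\<Sum>T\<in>Pow {..<n}. if S = T then f S * f T else 0)"
      by (intro sum.cong refl) simp
    also have "\<dots> = f S * f S" using S by (simp add: sum.delta)
    finally show "(\<Sum>T\<in>Pow {..<n}. (f S * f T) * (if S = T then 1 else 0)) = (f S)^2"
      by (simp add: power2_eq_square)
  qed
  finally show ?thesis .
qed

lemma Ex_mlpoly_tilt: "Exn X n (\<lambda>x. mlpoly n f x * (\<Prod>i<n. 1 + \<mu> i * x i)) = mlpoly n f \<mu>"
proof -
  have "Exn X n (\<lambda>x. mlpoly n f x * (\<Prod>i<n. 1 + \<mu> i * x i)) =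
     Exn X n (\<lambda>x. \<Sum>S\<in>Pow {..<n}. f S * ((\<Prod>i\<in>S. x i) * (\<Prod>i<n. 1 + \<mu> i * x i)))"
    unfolding mlpoly_def sum_distrib_right by (simp add: mult_ac)
  also have "\<dots> = mlpoly n f \<mu>"
    unfolding Ex_sum Ex_cmult mlpoly_def by (intro sum.cong refl) (simp add: Ex_mono_tilt)
  finally show ?thesis .
qed

end


lemma aux_g3h: "2 * \<bar>u^3 * v\<bar> \<le> u^4 + u^2 * (v::real)^2"
proof -
  have "0 \<le> (\<bar>u\<bar> - \<bar>v\<bar>)^2" by simp
  then have "2 * \<bar>u\<bar> * \<bar>v\<bar> \<le> \<bar>u\<bar>^2 + \<bar>v\<bar>^2" by (simp add: power2_diff)
  then have "2 * \<bar>u\<bar> * \<bar>v\<bar> \<le> u^2 + v^2" by simp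
  then have "u^2 * (2 * \<bar>u\<bar> * \<bar>v\<bar>) \<le> u^2 * (u^2 + v^2)"
    by (intro mult_left_mono) auto
  moreover have "\<bar>u^3 * v\<bar> = u^2 * (\<bar>u\<bar> * \<bar>v\<bar>)"
    by (simp add: abs_mult power_abs power2_eq_square power3_eq_cube abs_mult_self_eq)
  moreover have "u^2 * (u^2 + v^2) = u^4 + u^2 * v^2"
    by (simp add: distrib_left power2_eq_square power4_eq_xxxx)
  moreover have "2 * (u^2 * (\<bar>u\<bar> * \<bar>v\<bar>)) = u^2 * (2 * \<bar>u\<bar> * \<bar>v\<bar>)" by simp
  ultimately show ?thesis by linarith
qed

lemma aux_half1: "2 * \<bar>q\<bar> \<le> (R::real) \<Longrightarrow> q \<le> R / 2" by arith
lemma aux_half2: "2 * \<bar>q\<bar> \<le> (R::real) \<Longrightarrow> (-1) * q \<le> R / 2" by arith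

lemma final_arith:
  fixes a b c e A B m3 m4 \<beta> :: real
  assumes "0 \<le> A" "0 \<le> B" "a \<le> A^2" "b \<le> B^2" "0 \<le> c" "c \<le> A * B" "\<bar>e\<bar> \<le> (a + c) / 2"
    "0 \<le> m4" "m4 + 2 * \<bar>m3\<bar> \<le> \<beta>^2" "\<bar>m3\<bar> + 3 \<le> \<beta>" "0 \<le> a"
  shows "m4 * a + 4 * m3 * e + 6 * c + b \<le> (\<beta> * A + B)^2"
proof -
  have 1: "m4 * a \<le> m4 * A^2" using assms by (intro mult_left_mono) auto
  have "4 * m3 * e \<le> \<bar>4 * m3 * e\<bar>" by (rule abs_ge_self)
  also have "\<dots> = 4 * \<bar>m3\<bar> * \<bar>e\<bar>" by (simp add: abs_mult)
  also have "\<dots> \<le> 4 * \<bar>m3\<bar> * ((a + c) / 2)" using assms by (intro mult_left_mono) auto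
  also have "\<dots> \<le> 4 * \<bar>m3\<bar> * ((A^2 + A * B) / 2)" using assms by (intro mult_left_mono) auto
  also have "\<dots> = 2 * \<bar>m3\<bar> * A^2 + 2 * \<bar>m3\<bar> * (A * B)" by (simp add: distrib_left)
  finally have 2: "4 * m3 * e \<le> 2 * \<bar>m3\<bar> * A^2 + 2 * \<bar>m3\<bar> * (A * B)" .
  have AB: "0 \<le> A * B" using assms by simp
  have 3: "(m4 + 2 * \<bar>m3\<bar>) * A^2 \<le> \<beta>^2 * A^2" using assms by (intro mult_right_mono) auto
  have 4: "(2 * \<bar>m3\<bar> + 6) * (A * B) \<le> (2 * \<beta>) * (A * B)" using assms AB by (intro mult_right_mono) auto
  have "m4 * a + 4 * m3 * e + 6 * c + b \<le> (m4 + 2 * \<bar>m3\<bar>) * A^2 + (2 * \<bar>m3\<bar> + 6) * (A * B) + B^2"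
  proof -
    have "(m4 + 2 * \<bar>m3\<bar>) * A^2 + (2 * \<bar>m3\<bar> + 6) * (A * B) + B^2 =
          m4 * A^2 + (2 * \<bar>m3\<bar> * A^2 + 2 * \<bar>m3\<bar> * (A * B)) + 6 * (A * B) + B^2"
      by (simp add: distrib_right)
    then show ?thesis using 1 2 assms(4,6) by linarith
  qed
  also have "\<dots> \<le> \<beta>^2 * A^2 + (2 * \<beta>) * (A * B) + B^2" using 3 4 by simp
  also have "\<dots> = (\<beta> * A + B)^2" by (simp add: power2_sum power_mult_distrib)
  finally show ?thesis .
qed

context rvX
begin

definition m3 where "m3 = E1 X (\<lambda>y. y^3)"
definition m4 where "m4 = E1 X (\<lambda>y. y^4)"

lemma m4_nonneg: "0 \<le> m4"
  unfolding m4_def E1_def by (intro sum_nonneg mult_nonneg_nonneg) (auto simp: zero_le_even_power)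

lemma E1_quart: "E1 X (\<lambda>y. a * y^4 + e * y^3 + c * y^2 + g * y + b) = a * m4 + e * m3 + c + b"
proof -
  have "E1 X (\<lambda>y. a * y^4 + e * y^3 + c * y^2 + g * y + b) =
     E1 X (\<lambda>y. a * y^4 + e * y^3 + c * y^2 + g * y) + E1 X (\<lambda>y. b)" by (rule E1_add)
  also have "E1 X (\<lambda>y. a * y^4 + e * y^3 + c * y^2 + g * y) =
     E1 X (\<lambda>y. a * y^4 + e * y^3 + c * y^2) + E1 X (\<lambda>y. g * y)" by (rule E1_add)
  also have "E1 X (\<lambda>y. a * y^4 + e * y^3 + c * y^2) =
     E1 X (\<lambda>y. a * y^4 + e * y^3) + E1 X (\<lambda>y. c * y^2)" by (rule E1_add)
  also have "E1 X (\<lambda>y. a * y^4 + e * y^3) = E1 X (\<lambda>y. a * y^4) + E1 X (\<lambda>y. e * y^3)" by (rule E1_add)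
  also have "E1 X (\<lambda>y. a * y^4) = a * m4" unfolding m4_def by (rule E1_cmult)
  also have "E1 X (\<lambda>y. e * y^3) = e * m3" unfolding m3_def by (rule E1_cmult)
  also have "E1 X (\<lambda>y. c * y^2) = c" using E1_cmult[of c "\<lambda>y. y^2"] m2 by simp
  also have "E1 X (\<lambda>y. g * y) = 0" using E1_cmult[of g "\<lambda>y. y"] m1 by simp
  also have "E1 X (\<lambda>y. b) = b" by (rule E1_const)
  finally show ?thesis by simp
qed

lemma Bonami:
  assumes \<beta>1: "m4 + 2 * \<bar>m3\<bar> \<le> \<beta>^2" and \<beta>2: "\<bar>m3\<bar> + 3 \<le> \<beta>"
  shows "Exn X n (\<lambda>x. (mlpoly n f x)^4) \<le> (NB \<beta> n f)^2"
proof (induction n arbitrary: f)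
  case 0
  have "mlpoly 0 f x = f {}" for x unfolding mlpoly_def by simp
  then show ?case by (simp add: Ex_0 NB_def power2_eq_square power4_eq_xxxx)
next
  case (Suc n)
  define g where "g = (\<lambda>S. f (insert n S))"
  define G where "G = mlpoly n g"
  define H where "H = mlpoly n f"
  define a where "a = Exn X n (\<lambda>x. (G x)^4)"
  define b where "b = Exn X n (\<lambda>x. (H x)^4)"
  define c where "c = Exn X n (\<lambda>x. (G x)^2 * (H x)^2)"
  define e where "e = Exn X n (\<lambda>x. (G x)^3 * H x)"
  define gg where "gg = Exn X n (\<lambda>x. G x * (H x)^3)"
  have \<beta>0: "0 \<le> \<beta>" using \<beta>2 by simp
  have expand: "Exn X n (\<lambda>x. (y * G x + H x)^4) = y^4 * a + 4 * y^3 * e + 6 * y^2 * c + 4 * y * gg + b" for y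
  proof -
    have "(\<lambda>x. (y * G x + H x)^4) = (\<lambda>x. y^4 * (G x)^4 + (4 * y^3) * ((G x)^3 * H x) + (6 * y^2) * ((G x)^2 * (H x)^2)
        + (4 * y) * (G x * (H x)^3) + (H x)^4)"
      by (simp add: fun_eq_iff power4_eq_xxxx power3_eq_cube power2_eq_square algebra_simps)
    then show ?thesis unfolding a_def b_def c_def e_def gg_def
      by (simp add: Ex_add Ex_cmult)
  qed
  have "Exn X (Suc n) (\<lambda>x. (mlpoly (Suc n) f x)^4) =
        (\<Sum>y\<in>set_pmf X. pmf X y * Exn X n (\<lambda>x. (y * G x + H x)^4))"
    unfolding Ex_Suc[OF finX] mlpoly_Suc G_def H_def g_def ..
  also have "\<dots> = E1 X (\<lambda>y. a * y^4 + (4 * e) * y^3 + (6 * c) * y^2 + (4 * gg) * y + b)"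
    unfolding E1_def expand by (intro sum.cong refl) (simp add: mult_ac)
  also have "\<dots> = a * m4 + 4 * e * m3 + 6 * c + b" by (simp add: E1_quart)
  finally have L: "Exn X (Suc n) (\<lambda>x. (mlpoly (Suc n) f x)^4) = m4 * a + 4 * m3 * e + 6 * c + b"
    by (simp add: mult_ac)
  have IHa: "a \<le> (NB \<beta> n g)^2" unfolding a_def G_def by (rule Suc.IH)
  have IHb: "b \<le> (NB \<beta> n f)^2" unfolding b_def H_def by (rule Suc.IH)
  have a0: "0 \<le> a" unfolding a_def by (intro Ex_nonneg) (simp add: zero_le_even_power)
  have b0: "0 \<le> b" unfolding b_def by (intro Ex_nonneg) (simp add: zero_le_even_power)
  have c0: "0 \<le> c" unfolding c_def by (intro Ex_nonneg) simp
  have "c^2 \<le> Exn X n (\<lambda>x. ((G x)^2)^2) * Exn X n (\<lambda>x. ((H x)^2)^2)"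
    unfolding c_def by (rule Ex_CS)
  also have "\<dots> = a * b" unfolding a_def b_def by (simp add: power_mult[symmetric])
  also have "\<dots> \<le> (NB \<beta> n g)^2 * (NB \<beta> n f)^2"
    using IHa IHb a0 b0 by (intro mult_mono) auto
  also have "\<dots> = (NB \<beta> n g * NB \<beta> n f)^2" by (rule power_mult_distrib[symmetric])
  finally have csq: "c^2 \<le> (NB \<beta> n g * NB \<beta> n f)^2" .
  have "0 \<le> NB \<beta> n g * NB \<beta> n f" by (intro mult_nonneg_nonneg NB_nonneg \<beta>0)
  then have "c \<le> NB \<beta> n g * NB \<beta> n f" by (rule power2_le_imp_le[OF csq])
  moreover have "\<bar>e\<bar> \<le> (a + c) / 2"
  proof -
    have "e \<le> Exn X n (\<lambda>x. ((G x)^4 + (G x)^2 * (H x)^2) / 2)"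
      unfolding e_def
    proof (intro Ex_mono)
      fix x
      show "(G x)^3 * H x \<le> ((G x)^4 + (G x)^2 * (H x)^2) / 2"
        by (rule aux_half1[OF aux_g3h[of "G x" "H x"]])
    qed
    moreover have "- e \<le> Exn X n (\<lambda>x. ((G x)^4 + (G x)^2 * (H x)^2) / 2)"
    proof -
      have "- e = Exn X n (\<lambda>x. (-1) * ((G x)^3 * H x))" unfolding e_def Ex_cmult by simp
      also have "\<dots> \<le> Exn X n (\<lambda>x. ((G x)^4 + (G x)^2 * (H x)^2) / 2)"
      proof (intro Ex_mono)
        fix x
        show "(-1) * ((G x)^3 * H x) \<le> ((G x)^4 + (G x)^2 * (H x)^2) / 2"
          by (rule aux_half2[OF aux_g3h[of "G x" "H x"]])
      qed
      finally show ?thesis .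
    qed
    moreover have "Exn X n (\<lambda>x. ((G x)^4 + (G x)^2 * (H x)^2) / 2) = (a + c) / 2"
      unfolding a_def c_def using Ex_cmult[of X n "1/2" "\<lambda>x. (G x)^4 + (G x)^2 * (H x)^2"] Ex_add
      by simp
    ultimately show ?thesis by linarith
  qed
  ultimately have "m4 * a + 4 * m3 * e + 6 * c + b \<le> (\<beta> * NB \<beta> n g + NB \<beta> n f)^2"
    using IHa IHb a0 c0 m4_nonneg \<beta>1 \<beta>2 NB_nonneg[OF \<beta>0]
    by (intro final_arith) auto
  then show ?case unfolding L NB_Suc g_def .
qed

end


fun cheb :: "nat \<Rightarrow> real poly" where
  "cheb 0 = 1"
| "cheb (Suc 0) = [:0, 1:]"
| "cheb (Suc (Suc n)) = [:0, 2:] * cheb (Suc n) - cheb n"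

lemma poly_cheb_cos: "poly (cheb n) (cos t) = cos (real n * t)"
proof (induction n rule: cheb.induct)
  case 1 then show ?case by simp
next
  case 2 then show ?case by simp
next
  case (3 n)
  have "cos (real (Suc (Suc n)) * t) + cos (real n * t) = 2 * cos t * cos (real (Suc n) * t)"
  proof -
    have a: "real (Suc (Suc n)) * t = real (Suc n) * t + t" by (simp add: algebra_simps)
    have b: "real n * t = real (Suc n) * t - t" by (simp add: algebra_simps)
    show ?thesis unfolding a b cos_add cos_diff by simp
  qed
  then show ?case using 3 by (simp add: algebra_simps)
qed

lemma degree_cheb: "degree (cheb n) \<le> n"
proof (induction n rule: cheb.induct)
  case 1 then show ?case by simp
next
  case 2 then show ?case by simp
next
  case (3 n)
  have "degree ([:0, 2:] * cheb (Suc n)) \<le> Suc (Suc n)"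
  proof -
    have "degree ([:0, 2:] * cheb (Suc n)) \<le> degree [:0, (2::real):] + degree (cheb (Suc n))"
      by (rule degree_mult_le)
    also have "\<dots> \<le> 1 + Suc n" using 3(1) by simp
    finally show ?thesis by simp
  qed
  moreover have "degree (cheb n) \<le> Suc (Suc n)" using 3(2) by simp
  ultimately show ?case by (simp add: degree_diff_le)
qed

lemma coeff_mult_x2_0: "coeff ([:0, 2:] * p) 0 = (0::real)"
  by (simp add: coeff_mult)

lemma coeff_mult_x2_1: "coeff ([:0, 2:] * p) 1 = 2 * coeff p 0"
  by (simp add: coeff_mult)

lemma cheb_coeffs:
  "coeff (cheb (2*j)) 0 = (-1)^j \<and> coeff (cheb (2*j+1)) 0 = 0 \<and> coeff (cheb (2*j+1)) 1 = (-1)^j * (2 * real j + 1)"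
proof (induction j)
  case 0 then show ?case by simp
next
  case (Suc j)
  have e1: "2 * Suc j = Suc (Suc (2*j))" by simp
  have e2: "2 * Suc j + 1 = Suc (Suc (2*j+1))" by simp
  have c0: "coeff (cheb (2 * Suc j)) 0 = (-1)^Suc j"
    unfolding e1 cheb.simps using Suc by (simp add: coeff_mult_x2_0)
  moreover have "coeff (cheb (2 * Suc j + 1)) 0 = 0"
    unfolding e2 cheb.simps using Suc by (simp add: coeff_mult_x2_0)
  moreover have "coeff (cheb (2 * Suc j + 1)) 1 = (-1)^Suc j * (2 * real (Suc j) + 1)"
  proof -
    have "coeff (cheb (2 * Suc j + 1)) 1 = 2 * coeff (cheb (2 * Suc j)) 0 - coeff (cheb (2*j+1)) 1"
      unfolding e2 cheb.simps e1[symmetric] by (simp add: coeff_mult_x2_1)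
    also have "\<dots> = (-1)^Suc j * (2 * real (Suc j) + 1)" using c0 Suc by (simp add: algebra_simps)
    finally show ?thesis .
  qed
  ultimately show ?case by blast
qed


lemma cheb_at_node:
  assumes "0 < m"
  shows "poly (cheb m) (cos (real k * pi / real m)) = (-1)^k"
proof -
  have "real m * (real k * pi / real m) = real k * pi" using assms by simp
  then show ?thesis by (simp add: poly_cheb_cos)
qed

lemma pos_mult_neg_aux: "0 < (a::real) \<Longrightarrow> a * b < 0 \<Longrightarrow> b < 0"
  by (metis less_eq_real_def mult_nonneg_nonneg not_less)

lemma bernstein0:
  fixes q :: "real poly" and j :: nat
  assumes deg: "degree q \<le> 2*j+1" and q0: "coeff q 0 = 0"
    and bnd: "\<And>x. -1 \<le> x \<Longrightarrow> x \<le> 1 \<Longrightarrow> \<bar>poly q x\<bar> < 1"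
  shows "coeff q 1 \<le> 2 * real j + 1"
proof (rule ccontr)
  assume "\<not> ?thesis"
  then have big: "coeff q 1 > 2 * real j + 1" by simp
  define m where "m = 2*j+1"
  have m0: "0 < m" unfolding m_def by simp
  define \<sigma> where "\<sigma> = ((-1::real)^j)"
  have \<sigma>sq: "\<sigma> * \<sigma> = 1" unfolding \<sigma>_def by (simp add: power_mult_distrib[symmetric])
  define r where "r = q - smult \<sigma> (cheb m)"
  have cc: "coeff (cheb m) 0 = 0" "coeff (cheb m) 1 = \<sigma> * (2 * real j + 1)"
    using cheb_coeffs[of j] unfolding m_def \<sigma>_def by auto
  have r0: "coeff r 0 = 0" unfolding r_def using q0 cc by simp
  have r1: "coeff r 1 = coeff q 1 - (2 * real j + 1)"
    unfolding r_def using cc by (simp add: mult.assoc[symmetric] \<sigma>sq)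
  obtain a s where ras: "r = pCons a s" by (cases r) auto
  have "a = 0" using r0 ras by simp
  then have rs: "r = pCons 0 s" using ras by simp
  have s0: "poly s 0 > 0"
  proof -
    have "coeff r 1 = coeff s 0" unfolding rs by (simp add: One_nat_def)
    then show ?thesis using r1 big by (simp add: poly_0_coeff_0)
  qed
  have sne: "s \<noteq> 0" using s0 by auto
  have degr: "degree r \<le> m"
    unfolding r_def
    by (intro degree_diff_le) (use deg degree_cheb[of m] degree_smult_le[of \<sigma> "cheb m"] in \<open>auto simp: m_def\<close>)
  have degs: "degree s < m" using degr unfolding rs using degree_pCons_eq[OF sne, of 0] by simp
  have polyr: "poly r x = x * poly s x" for x unfolding rs by simp
  define xk where "xk k = cos (real k * pi / real m)" for k
  have node: "poly r (xk k) = poly q (xk k) - \<sigma> * (-1)^k" for k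
    unfolding r_def xk_def using cheb_at_node[OF m0, of k] by simp
  have xk_bnd: "-1 \<le> xk k" "xk k \<le> 1" for k unfolding xk_def by auto
  have sign: "(\<sigma> * (-1)^k) * poly r (xk k) < 0" for k
  proof -
    have e2: "(\<sigma> * (-1)^k) * (\<sigma> * (-1)^k) = 1"
      using \<sigma>sq by (simp add: algebra_simps power_mult_distrib[symmetric])
    have ea: "\<bar>\<sigma> * (-1)^k\<bar> = 1" unfolding \<sigma>_def by (simp add: abs_mult power_abs)
    have "(\<sigma> * (-1)^k) * poly r (xk k) = (\<sigma> * (-1)^k) * poly q (xk k) - 1"
      unfolding node using e2 by (simp add: right_diff_distrib)
    moreover have "(\<sigma> * (-1)^k) * poly q (xk k) < 1"
    proof -
      have "(\<sigma> * (-1)^k) * poly q (xk k) \<le> \<bar>(\<sigma> * (-1)^k) * poly q (xk k)\<bar>" by simp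
      also have "\<dots> = \<bar>poly q (xk k)\<bar>" using ea by (simp add: abs_mult)
      also have "\<dots> < 1" using bnd xk_bnd by auto
      finally show ?thesis .
    qed
    ultimately show ?thesis by simp
  qed
  have dec: "xk l < xk k" if "k < l" "l \<le> m" for k l
  proof -
    have "real k * pi / real m < real l * pi / real m"
      using that m0 by (intro divide_strict_right_mono mult_strict_right_mono) auto
    moreover have "real l * pi / real m \<le> pi"
      using that m0 by (simp add: divide_le_eq)
    moreover have "0 \<le> real k * pi / real m" by simp
    ultimately show ?thesis unfolding xk_def by (intro cos_monotone_0_pi) auto
  qed
  have pos: "0 < xk k" if "k \<le> j" for k
  proof -
    have "real k * pi / real m < pi / 2"
    proof -
      have "2 * real k < real m" using that unfolding m_def by simp
      then have "2 * real k * pi < real m * pi" by (intro mult_strict_right_mono) auto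
      then show ?thesis using m0 by (simp add: field_simps)
    qed
    moreover have "- (pi / 2) < real k * pi / real m"
    proof -
      have "0 \<le> real k * pi / real m" by simp
      then show ?thesis using pi_gt_zero by linarith
    qed
    ultimately show ?thesis unfolding xk_def by (intro cos_gt_zero_pi)
  qed
  have neg: "xk k < 0" if "j + 1 \<le> k" "k \<le> m" for k
  proof -
    have "pi / 2 < real k * pi / real m"
    proof -
      have "real m < 2 * real k" using that unfolding m_def by simp
      then have "real m * pi < 2 * real k * pi" by (intro mult_strict_right_mono) auto
      then show ?thesis using m0 by (simp add: field_simps)
    qed
    moreover have "real k * pi / real m \<le> pi" using that m0 by (simp add: divide_le_eq)
    ultimately have "cos (real k * pi / real m) < cos (pi / 2)"
      by (subst cos_mono_less_eq) auto
    then show ?thesis unfolding xk_def by simp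
  qed
  define lo where "lo k = (if k = j then 0 else xk (Suc k))" for k
  have interval: "lo k < xk k \<and> poly s (lo k) * poly s (xk k) < 0" if "k < m" for k
  proof (cases "k = j")
    case True
    have xp: "0 < xk j" using pos by simp
    have "\<sigma> * (-1)^j = 1" using \<sigma>sq unfolding \<sigma>_def by simp
    then have "poly r (xk j) < 0" using sign[of j] by simp
    then have "poly s (xk j) < 0" using xp unfolding polyr by (simp add: mult_less_0_iff)
    then show ?thesis using True xp s0 by (simp add: lo_def mult_pos_neg)
  next
    case False
    have kk: "Suc k \<le> m" using that by simp
    have lt: "lo k < xk k" using False dec[of k "Suc k"] kk by (simp add: lo_def)
    have same: "0 < xk k * xk (Suc k)"
    proof (cases "k < j")
      case True then show ?thesis using pos[of k] pos[of "Suc k"] by simp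
    next
      case False then have "j + 1 \<le> k" using \<open>k \<noteq> j\<close> by simp
      then show ?thesis using neg[of k] neg[of "Suc k"] kk by (simp add: mult_neg_neg)
    qed
    have "0 < ((\<sigma> * (-1)^k) * poly r (xk k)) * ((\<sigma> * (-1)^Suc k) * poly r (xk (Suc k)))"
      by (rule mult_neg_neg[OF sign[of k] sign[of "Suc k"]])
    also have "\<dots> = - ((\<sigma> * \<sigma>) * ((-1)^k * (-1)^k)) * (poly r (xk k) * poly r (xk (Suc k)))"
      by (simp add: algebra_simps)
    also have "\<dots> = - (poly r (xk k) * poly r (xk (Suc k)))"
      using \<sigma>sq by (simp add: power_mult_distrib[symmetric])
    finally have "poly r (xk k) * poly r (xk (Suc k)) < 0" by simp
    then have "(xk k * xk (Suc k)) * (poly s (xk k) * poly s (xk (Suc k))) < 0"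
      unfolding polyr by (simp add: algebra_simps)
    then have "poly s (xk k) * poly s (xk (Suc k)) < 0"
      using pos_mult_neg_aux[OF same] by blast
    then show ?thesis using lt False by (simp add: lo_def mult.commute)
  qed
  have "\<forall>k\<in>{..<m}. \<exists>x. lo k < x \<and> x < xk k \<and> poly s x = 0"
  proof
    fix k assume "k \<in> {..<m}"
    then have "lo k < xk k" "poly s (lo k) * poly s (xk k) < 0" using interval by auto
    then show "\<exists>x. lo k < x \<and> x < xk k \<and> poly s x = 0" using poly_IVT by blast
  qed
  then obtain z where z: "\<And>k. k \<in> {..<m} \<Longrightarrow> lo k < z k \<and> z k < xk k \<and> poly s (z k) = 0"
    by metis
  have ord: "z l < z k" if "k < l" "l < m" for k l
  proof -
    have "xk l \<le> lo k"
    proof (cases "k = j")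
      case True then show ?thesis using neg[of l] that by (simp add: lo_def)
    next
      case False
      show ?thesis
      proof (cases "l = Suc k")
        case True then show ?thesis using False by (simp add: lo_def)
      next
        case False
        then have "Suc k < l" using that by simp
        then show ?thesis using dec[of "Suc k" l] that \<open>k \<noteq> j\<close> by (simp add: lo_def)
      qed
    qed
    then show ?thesis using z[of k] z[of l] that by force
  qed
  have inj: "inj_on z {..<m}"
  proof (rule inj_onI)
    fix k l assume "k \<in> {..<m}" "l \<in> {..<m}" "z k = z l"
    then show "k = l" using ord[of k l] ord[of l k] by (cases k l rule: linorder_cases) auto
  qed
  have "z ` {..<m} \<subseteq> {x. poly s x = 0}" using z by auto
  then have "card (z ` {..<m}) \<le> card {x. poly s x = 0}"
    by (intro card_mono poly_roots_finite sne)
  also have "\<dots> \<le> degree s" by (rule card_poly_roots_bound[OF sne])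
  finally have "m \<le> degree s" using card_image[OF inj] by simp
  then show False using degs by simp
qed


lemma line_poly:
  assumes deg: "mldegree_le n f d"
  shows "\<exists>P. (\<forall>s. poly P s = mlpoly n f (\<lambda>i. s * \<mu>0 i)) \<and> degree P \<le> d \<and>
             coeff P 1 = (\<Sum>i<n. f {i} * \<mu>0 i)"
proof -
  define P where "P = (\<Sum>S\<in>Pow {..<n}. monom (f S * (\<Prod>i\<in>S. \<mu>0 i)) (card S))"
  have "poly P s = mlpoly n f (\<lambda>i. s * \<mu>0 i)" for s
    unfolding P_def mlpoly_def poly_sum poly_monom
    by (intro sum.cong refl) (simp add: prod.distrib mult_ac)
  moreover have "degree P \<le> d"
    unfolding P_def
  proof (intro degree_sum_le)
    fix S assume S: "S \<in> Pow {..<n}"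
    show "degree (monom (f S * (\<Prod>i\<in>S. \<mu>0 i)) (card S)) \<le> d"
    proof (cases "f S = 0")
      case True then show ?thesis by simp
    next
      case False then have "card S \<le> d" using deg S unfolding mldegree_le_def by auto
      then show ?thesis using degree_monom_le[of "f S * (\<Prod>i\<in>S. \<mu>0 i)" "card S"] by linarith
    qed
  qed simp
  moreover have "coeff P 1 = (\<Sum>i<n. f {i} * \<mu>0 i)"
  proof -
    have "coeff P 1 = (\<Sum>S\<in>Pow {..<n}. if card S = 1 then f S * (\<Prod>i\<in>S. \<mu>0 i) else 0)"
      unfolding P_def coeff_sum coeff_monom by (rule sum.cong) auto
    also have "\<dots> = (\<Sum>S\<in>{S\<in>Pow {..<n}. card S = 1}. f S * (\<Prod>i\<in>S. \<mu>0 i))"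
      by (rule sum.inter_filter[symmetric]) simp
    also have "{S\<in>Pow {..<n}. card S = 1} = (\<lambda>i. {i}) ` {..<n}"
    proof (intro equalityI subsetI)
      fix S assume "S \<in> {S\<in>Pow {..<n}. card S = 1}"
      then obtain i where "S = {i}" "i < n" by (auto simp: card_1_singleton_iff)
      then show "S \<in> (\<lambda>i. {i}) ` {..<n}" by auto
    qed auto
    also have "(\<Sum>S\<in>(\<lambda>i. {i}) ` {..<n}. f S * (\<Prod>i\<in>S. \<mu>0 i)) = (\<Sum>i<n. f {i} * \<mu>0 i)"
      by (subst sum.reindex) (auto simp: inj_on_def)
    finally show ?thesis .
  qed
  ultimately show ?thesis by blast
qed

context rvX
begin

lemma NB_le:
  assumes "mldegree_le n f d" "1 \<le> \<beta>"
  shows "NB \<beta> n f \<le> \<beta>^d * (\<Sum>S\<in>Pow {..<n}. (f S)^2)"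
  unfolding NB_def sum_distrib_left
proof (intro sum_mono)
  fix S assume S: "S \<in> Pow {..<n}"
  show "\<beta> ^ card S * (f S)^2 \<le> \<beta>^d * (f S)^2"
  proof (cases "f S = 0")
    case True then show ?thesis by simp
  next
    case False then have "card S \<le> d" using assms S unfolding mldegree_le_def by auto
    then have "\<beta> ^ card S \<le> \<beta>^d" using assms(2) by (rule power_increasing)
    then show ?thesis by (intro mult_right_mono) auto
  qed
qed

lemma Ex_indicator_sq: "Exn X n (\<lambda>x. (indicator A x)^2) = Exn X n (indicator A)"
  by (intro Ex_cong) (simp add: indicator_def)

lemma case_big:
  fixes F :: "(nat \<Rightarrow> real) \<Rightarrow> real"
  assumes t: "0 < t" and big: "4 * t^2 \<le> Exn X n (\<lambda>x. (F x)^2)"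
    and E4: "Exn X n (\<lambda>x. (F x)^4) \<le> B * (Exn X n (\<lambda>x. (F x)^2))^2" and B: "0 < B"
  shows "9 / (16 * B) \<le> Exn X n (indicator {x. t \<le> \<bar>F x\<bar>})"
proof -
  let ?A = "{x. t \<le> \<bar>F x\<bar>}"
  let ?E2 = "Exn X n (\<lambda>x. (F x)^2)"
  let ?Q = "Exn X n (indicator ?A)"
  have split: "?E2 = Exn X n (\<lambda>x. (F x)^2 * indicator ?A x) + Exn X n (\<lambda>x. (F x)^2 * (1 - indicator ?A x))"
    unfolding Ex_add[symmetric] by (intro Ex_cong) (simp add: algebra_simps)
  have small: "Exn X n (\<lambda>x. (F x)^2 * (1 - indicator ?A x)) \<le> t^2"
  proof -
    have "Exn X n (\<lambda>x. (F x)^2 * (1 - indicator ?A x)) \<le> Exn X n (\<lambda>_. t^2)"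
    proof (intro Ex_mono)
      fix x
      show "(F x)^2 * (1 - indicator ?A x) \<le> t^2"
      proof (cases "x \<in> ?A")
        case True then show ?thesis by simp
      next
        case False then have "\<bar>F x\<bar> < t" by simp
        then have "(F x)^2 < t^2" using t by (simp add: abs_less_iff power_strict_mono[of "\<bar>F x\<bar>" t 2, simplified])
        then show ?thesis using False by simp
      qed
    qed
    then show ?thesis using Ex_const[OF finX] by simp
  qed
  have cs: "(Exn X n (\<lambda>x. (F x)^2 * indicator ?A x))^2 \<le> Exn X n (\<lambda>x. ((F x)^2)^2) * Exn X n (\<lambda>x. (indicator ?A x)^2)"
    by (rule Ex_CS)
  have "(Exn X n (\<lambda>x. (F x)^2 * indicator ?A x))^2 \<le> Exn X n (\<lambda>x. (F x)^4) * ?Q"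
    using cs unfolding Ex_indicator_sq by (simp add: power_mult[symmetric])
  also have "\<dots> \<le> B * ?E2^2 * ?Q"
    using E4 by (intro mult_right_mono Ex_nonneg) auto
  finally have c1: "(Exn X n (\<lambda>x. (F x)^2 * indicator ?A x))^2 \<le> B * ?E2^2 * ?Q" .
  have E2pos: "0 < ?E2" using big t by (smt (verit) zero_less_power)
  have "3/4 * ?E2 \<le> Exn X n (\<lambda>x. (F x)^2 * indicator ?A x)" using split small big by linarith
  then have "(3/4 * ?E2)^2 \<le> (Exn X n (\<lambda>x. (F x)^2 * indicator ?A x))^2"
    using E2pos by (intro power_mono) auto
  moreover have "(3/4 * ?E2)^2 = 9/16 * ?E2^2" by (simp add: power2_eq_square)
  ultimately have "9/16 * ?E2^2 \<le> B * ?E2^2 * ?Q" using c1 by linarith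
  then have "9/16 \<le> B * ?Q" using E2pos by (simp add: mult.commute mult.left_commute)
  then show ?thesis using B by (simp add: field_simps)
qed

lemma case_tilt:
  fixes F :: "(nat \<Rightarrow> real) \<Rightarrow> real" and w :: "(nat \<Rightarrow> real) \<Rightarrow> real"
  assumes t: "0 < t" and wnn: "\<And>x. x \<in> DD n (set_pmf X) \<Longrightarrow> 0 \<le> w x"
    and w1: "Exn X n w = 1"
    and EF: "2 * t \<le> \<bar>Exn X n (\<lambda>x. F x * w x)\<bar>"
  shows "t^4 \<le> Exn X n (\<lambda>x. (F x)^4) * Exn X n (\<lambda>x. (w x)^4) * (Exn X n (indicator {x. t \<le> \<bar>F x\<bar>}))^2"
proof -
  let ?A = "{x. t \<le> \<bar>F x\<bar>}"
  let ?Q = "Exn X n (indicator ?A)"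
  have split: "Exn X n (\<lambda>x. F x * w x) = Exn X n (\<lambda>x. F x * w x * indicator ?A x) + Exn X n (\<lambda>x. F x * w x * (1 - indicator ?A x))"
    unfolding Ex_add[symmetric] by (intro Ex_cong) (simp add: algebra_simps)
  have up: "Exn X n (\<lambda>x. F x * w x * (1 - indicator ?A x)) \<le> Exn X n (\<lambda>x. t * w x)"
  proof (intro Ex_mono)
    fix x assume x: "x \<in> DD n (set_pmf X)"
    show "F x * w x * (1 - indicator ?A x) \<le> t * w x"
    proof (cases "x \<in> ?A")
      case True then show ?thesis using wnn[OF x] t by simp
    next
      case False then have h: "F x \<le> t" by simp
      have "F x * w x \<le> t * w x" by (rule mult_right_mono[OF h wnn[OF x]])
      then show ?thesis using False by simp
    qed
  qed
  have lo: "Exn X n (\<lambda>x. (-t) * w x) \<le> Exn X n (\<lambda>x. F x * w x * (1 - indicator ?A x))"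
  proof (intro Ex_mono)
    fix x assume x: "x \<in> DD n (set_pmf X)"
    show "(-t) * w x \<le> F x * w x * (1 - indicator ?A x)"
    proof (cases "x \<in> ?A")
      case True then show ?thesis using wnn[OF x] t by simp
    next
      case False then have h: "-t \<le> F x" by simp
      have "(-t) * w x \<le> F x * w x" by (rule mult_right_mono[OF h wnn[OF x]])
      then show ?thesis using False by simp
    qed
  qed
  have "Exn X n (\<lambda>x. t * w x) = t" using w1 Ex_cmult[of X n t w] by simp
  moreover have "Exn X n (\<lambda>x. (-t) * w x) = -t" using w1 Ex_cmult[of X n "-t" w] by simp
  ultimately have "\<bar>Exn X n (\<lambda>x. F x * w x * (1 - indicator ?A x))\<bar> \<le> t" using up lo by linarith
  then have t1: "t \<le> \<bar>Exn X n (\<lambda>x. F x * w x * indicator ?A x)\<bar>" using split EF by linarith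
  have "t^2 \<le> (Exn X n (\<lambda>x. F x * w x * indicator ?A x))^2"
    using t1 t by (metis abs_ge_zero power2_abs power_mono less_imp_le)
  also have "\<dots> \<le> Exn X n (\<lambda>x. (F x * w x)^2) * Exn X n (\<lambda>x. (indicator ?A x)^2)"
    by (rule Ex_CS)
  also have "\<dots> = Exn X n (\<lambda>x. (F x)^2 * (w x)^2) * ?Q"
    unfolding Ex_indicator_sq by (simp add: power_mult_distrib)
  finally have t2: "t^2 \<le> Exn X n (\<lambda>x. (F x)^2 * (w x)^2) * ?Q" .
  have Q0: "0 \<le> ?Q" by (intro Ex_nonneg) simp
  have a0: "0 \<le> Exn X n (\<lambda>x. (F x)^2 * (w x)^2)" by (intro Ex_nonneg) simp
  have "t^4 = (t^2)^2" by simp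
  also have "\<dots> \<le> (Exn X n (\<lambda>x. (F x)^2 * (w x)^2) * ?Q)^2"
    using t2 by (intro power_mono) auto
  also have "\<dots> = (Exn X n (\<lambda>x. (F x)^2 * (w x)^2))^2 * ?Q^2" by (simp add: power_mult_distrib)
  also have "\<dots> \<le> (Exn X n (\<lambda>x. ((F x)^2)^2) * Exn X n (\<lambda>x. ((w x)^2)^2)) * ?Q^2"
    by (intro mult_right_mono Ex_CS) simp
  also have "\<dots> = Exn X n (\<lambda>x. (F x)^4) * Exn X n (\<lambda>x. (w x)^4) * ?Q^2"
    by (simp add: power_mult[symmetric])
  finally show ?thesis .
qed

lemma E1_tilt4:
  assumes "\<bar>\<mu>\<bar> \<le> 1"
  shows "0 \<le> E1 X (\<lambda>y. (1 + \<mu> * y)^4)" "E1 X (\<lambda>y. (1 + \<mu> * y)^4) \<le> exp ((6 + 4 * \<bar>m3\<bar> + m4) * \<mu>^2)"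
proof -
  show "0 \<le> E1 X (\<lambda>y. (1 + \<mu> * y)^4)"
    unfolding E1_def by (intro sum_nonneg mult_nonneg_nonneg) (auto simp: zero_le_even_power)
  have "(\<lambda>y. (1 + \<mu> * y)^4) = (\<lambda>y. \<mu>^4 * y^4 + (4 * \<mu>^3) * y^3 + (6 * \<mu>^2) * y^2 + (4 * \<mu>) * y + 1)"
    by (simp add: fun_eq_iff power4_eq_xxxx power3_eq_cube power2_eq_square algebra_simps)
  then have eq: "E1 X (\<lambda>y. (1 + \<mu> * y)^4) = \<mu>^4 * m4 + 4 * \<mu>^3 * m3 + 6 * \<mu>^2 + 1"
    by (simp add: E1_quart)
  have mu2: "\<mu>^2 \<le> 1" using power_mono[OF assms abs_ge_zero, of 2] by simp
  have "\<mu>^4 = \<mu>^2 * \<mu>^2" by (simp add: power4_eq_xxxx power2_eq_square)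
  also have "\<dots> \<le> \<mu>^2 * 1" using mu2 by (intro mult_left_mono) auto
  finally have p4: "\<mu>^4 * m4 \<le> \<mu>^2 * m4" using m4_nonneg by (intro mult_right_mono) auto
  have "4 * \<mu>^3 * m3 \<le> \<bar>4 * \<mu>^3 * m3\<bar>" by simp
  also have "\<dots> = 4 * (\<mu>^2 * \<bar>\<mu>\<bar>) * \<bar>m3\<bar>" by (simp add: abs_mult power_abs power2_eq_square power3_eq_cube)
  also have "\<dots> \<le> 4 * (\<mu>^2 * 1) * \<bar>m3\<bar>" using assms by (intro mult_right_mono mult_left_mono) auto
  finally have p3: "4 * \<mu>^3 * m3 \<le> 4 * \<mu>^2 * \<bar>m3\<bar>" by simp
  have "E1 X (\<lambda>y. (1 + \<mu> * y)^4) \<le> 1 + (6 + 4 * \<bar>m3\<bar> + m4) * \<mu>^2"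
    unfolding eq using p3 p4 by (simp add: algebra_simps)
  also have "\<dots> \<le> exp ((6 + 4 * \<bar>m3\<bar> + m4) * \<mu>^2)" by (rule exp_ge_add_one_self)
  finally show "E1 X (\<lambda>y. (1 + \<mu> * y)^4) \<le> exp ((6 + 4 * \<bar>m3\<bar> + m4) * \<mu>^2)" .
qed

lemma Ex_w4_bound:
  assumes "\<And>i. i < n \<Longrightarrow> \<bar>\<mu> i\<bar> \<le> 1"
  shows "Exn X n (\<lambda>x. (\<Prod>i<n. 1 + \<mu> i * x i)^4) \<le> exp ((6 + 4 * \<bar>m3\<bar> + m4) * (\<Sum>i<n. (\<mu> i)^2))"
proof -
  have "Exn X n (\<lambda>x. (\<Prod>i<n. 1 + \<mu> i * x i)^4) = (\<Prod>i<n. E1 X (\<lambda>y. (1 + \<mu> i * y)^4))"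
    by (rule Ex_tilt_pow4)
  also have "\<dots> \<le> (\<Prod>i<n. exp ((6 + 4 * \<bar>m3\<bar> + m4) * (\<mu> i)^2))"
    using E1_tilt4 assms by (intro prod_mono) auto
  also have "\<dots> = exp ((6 + 4 * \<bar>m3\<bar> + m4) * (\<Sum>i<n. (\<mu> i)^2))"
    by (simp add: exp_sum sum_distrib_left)
  finally show ?thesis .
qed

end


lemma exp1_ge2: "2 \<le> exp (1::real)"
  using exp_ge_add_one_self[of "1::real"] by simp

lemma exp_nat_ge: "2^k \<le> exp (real k)"
proof -
  have "exp (real k) = exp 1 ^ k" using exp_of_nat_mult[of k "1::real"] by simp
  moreover have "(2::real)^k \<le> exp 1 ^ k" using exp1_ge2 by (intro power_mono) auto
  ultimately show ?thesis by simp
qed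

lemma pow_exp_ln: "0 < (\<beta>::real) \<Longrightarrow> \<beta>^k = exp (real k * ln \<beta>)"
  by (simp add: exp_of_nat_mult)

lemma num1:
  fixes T \<beta> c :: real
  assumes "1 \<le> T" "real d \<le> T" "1 \<le> \<beta>" "0 \<le> c"
  shows "exp (- (50 * c + 2 * ln \<beta> + 2) * T) * (16 * \<beta>^(2*d)) \<le> 9"
proof -
  have lb: "0 \<le> ln \<beta>" using assms by simp
  have "exp (- (50 * c + 2 * ln \<beta> + 2) * T) * (16 * \<beta>^(2*d)) =
        16 * exp (- (50 * c + 2 * ln \<beta> + 2) * T + real (2*d) * ln \<beta>)"
    using assms by (simp add: pow_exp_ln exp_add)
  also have "\<dots> \<le> 16 * exp (- 2)"
  proof -
    have A: "real (2*d) * ln \<beta> \<le> 2 * T * ln \<beta>" using assms lb by (intro mult_right_mono) auto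
    have B: "0 \<le> 50 * c * T" using assms by simp
    have eq: "- (50 * c + 2 * ln \<beta> + 2) * T + real (2*d) * ln \<beta> = - (50 * c * T) - 2 * T * ln \<beta> - 2 * T + real (2*d) * ln \<beta>"
      by (simp add: algebra_simps)
    have "- (50 * c + 2 * ln \<beta> + 2) * T + real (2*d) * ln \<beta> \<le> -2"
      unfolding eq using A B assms(1) by linarith
    then show ?thesis by simp
  qed
  also have "\<dots> \<le> 9"
  proof -
    have "4 \<le> exp (2::real)" using exp_nat_ge[of 2] by simp
    then have "exp (-2::real) \<le> 1/4" by (simp add: exp_minus field_simps)
    then show ?thesis by simp
  qed
  finally show ?thesis .
qed

lemma num2:
  fixes T \<beta> c :: real
  assumes "1 \<le> T" "real d \<le> T" "1 \<le> \<beta>" "0 \<le> c"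
  shows "16 * \<beta>^(2*d) * exp (100 * c * T) * (exp (- (50 * c + 2 * ln \<beta> + 2) * T))^2 \<le> 1"
proof -
  have lb: "0 \<le> ln \<beta>" using assms by simp
  have "16 * \<beta>^(2*d) * exp (100 * c * T) * (exp (- (50 * c + 2 * ln \<beta> + 2) * T))^2 =
        16 * exp (real (2*d) * ln \<beta> + 100 * c * T + 2 * (- (50 * c + 2 * ln \<beta> + 2) * T))"
  proof -
    have e: "(exp x)^2 = exp (2 * x)" for x :: real by (simp add: power2_eq_square exp_add[symmetric])
    have b0: "0 < \<beta>" using assms by simp
    show ?thesis unfolding e pow_exp_ln[OF b0] exp_add by (simp only: mult.assoc)
  qed
  also have "\<dots> \<le> 16 * exp (- 4)"
  proof -
    have "real (2*d) * ln \<beta> \<le> 2 * T * ln \<beta>" using assms lb by (intro mult_right_mono) auto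
    moreover have "2 * T * ln \<beta> \<le> 4 * T * ln \<beta>" using assms lb by (intro mult_right_mono) auto
    moreover have eq: "real (2*d) * ln \<beta> + 100 * c * T + 2 * (- (50 * c + 2 * ln \<beta> + 2) * T) =
        real (2*d) * ln \<beta> - 4 * T * ln \<beta> - 4 * T"
      by (simp add: algebra_simps)
    ultimately have "real (2*d) * ln \<beta> + 100 * c * T + 2 * (- (50 * c + 2 * ln \<beta> + 2) * T) \<le> -4"
      using assms(1) by linarith
    then show ?thesis by simp
  qed
  also have "\<dots> \<le> 1"
  proof -
    have "16 \<le> exp (4::real)" using exp_nat_ge[of 4] by simp
    then have "exp (-4::real) \<le> 1/16" by (simp add: exp_minus field_simps)
    then show ?thesis by simp
  qed
  finally show ?thesis .
qed


theorem lemma4p10: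
  fixes X :: "real pmf"
  assumes "finite (set_pmf X)"
    and "measure_pmf.expectation X (\<lambda>x. x) = 0"
    and "measure_pmf.variance X (\<lambda>x. x) = 1"
  shows "\<exists>K>0. \<exists>C>0. \<forall>(n::nat) (d::nat) (fhat :: nat set \<Rightarrow> real) (t::real).
           mldegree_le n fhat d
         \<longrightarrow> (\<Sum>i<n. (fhat {i})\<^sup>2) \<ge> 1
         \<longrightarrow> t \<ge> 1
         \<longrightarrow> (\<forall>i<n. \<bar>fhat {i}\<bar> \<le> 1 / (K * t * real d))
         \<longrightarrow> measure_pmf.prob (Pi_pmf {..<n} 0 (\<lambda>_. X)) {x. \<bar>mlpoly n fhat x\<bar> \<ge> t}
               \<ge> exp (- C * t\<^sup>2 * (real d)\<^sup>2)"
proof -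
  have finX: "finite (set_pmf X)" by (rule assms(1))
  have ex_sum: "measure_pmf.expectation X g = E1 X g" for g :: "real \<Rightarrow> real"
  proof -
    have "measure_pmf.expectation X g = (\<Sum>a\<in>set_pmf X. g a * pmf X a)"
      by (rule integral_measure_pmf_real[OF finX]) simp
    then show ?thesis unfolding E1_def by (simp add: mult.commute)
  qed
  have m1: "E1 X (\<lambda>y. y) = 0" using assms(2) ex_sum[of "\<lambda>x. x"] by simp
  have m2: "E1 X (\<lambda>y. y^2) = 1"
    using assms(3) unfolding assms(2) using ex_sum[of "\<lambda>x. (x - 0)^2"] by simp
  interpret rvX X by unfold_locales (rule finX, rule m1, rule m2)
  define \<beta> where "\<beta> = 3 + m4 + 2 * \<bar>m3\<bar>"
  define c where "c = 6 + 4 * \<bar>m3\<bar> + m4"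
  define M where "M = max 1 (Max (abs ` set_pmf X))"
  define K where "K = 10 * M"
  define C where "C = 50 * c + 2 * ln \<beta> + 2"
  have \<beta>3: "3 \<le> \<beta>" unfolding \<beta>_def using m4_nonneg by simp
  have c0: "0 \<le> c" unfolding c_def using m4_nonneg by simp
  have M1: "1 \<le> M" unfolding M_def by simp
  have K0: "0 < K" unfolding K_def using M1 by simp
  have C0: "0 < C"
  proof -
    have "0 \<le> ln \<beta>" using \<beta>3 by simp
    then show ?thesis unfolding C_def using c0 by linarith
  qed
  have hV: "\<bar>y\<bar> \<le> M" if "y \<in> set_pmf X" for y
  proof -
    have "\<bar>y\<bar> \<le> Max (abs ` set_pmf X)" using that finX by (intro Max_ge) auto
    then show ?thesis unfolding M_def by simp
  qed
  have \<beta>1: "m4 + 2 * \<bar>m3\<bar> \<le> \<beta>^2"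
  proof -
    have "\<beta> \<le> \<beta> * \<beta>" using \<beta>3 by (simp add: mult_le_cancel_left1)
    then show ?thesis unfolding power2_eq_square using \<beta>_def by linarith
  qed
  have \<beta>2: "\<bar>m3\<bar> + 3 \<le> \<beta>" unfolding \<beta>_def using m4_nonneg by simp
  have main: "exp (- C * t^2 * (real d)^2) \<le> measure_pmf.prob (Pi_pmf {..<n} 0 (\<lambda>_. X)) {x. t \<le> \<bar>mlpoly n f x\<bar>}"
    if hdeg: "mldegree_le n f d" and hW: "1 \<le> (\<Sum>i<n. (f {i})^2)" and ht: "1 \<le> t"
      and hsmall: "\<forall>i<n. \<bar>f {i}\<bar> \<le> 1 / (K * t * real d)" for n d f t
  proof -
    have d1: "1 \<le> d"
    proof (rule ccontr)
      assume "\<not> 1 \<le> d" then have "d = 0" by simp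
      then have "\<forall>i<n. f {i} = 0" using hsmall by simp
      then have "(\<Sum>i<n. (f {i})^2) = 0" by simp
      then show False using hW by simp
    qed
    have t0: "0 < t" using ht by simp
    define F where "F = mlpoly n f"
    define Q where "Q = Exn X n (indicator {x. t \<le> \<bar>F x\<bar>})"
    have probQ: "measure_pmf.prob (Pi_pmf {..<n} 0 (\<lambda>_. X)) {x. t \<le> \<bar>mlpoly n f x\<bar>} = Q"
      unfolding Q_def F_def by (rule prob_Ex[OF finX])
    have Q0: "0 \<le> Q" unfolding Q_def by (intro Ex_nonneg) simp
    define E2 where "E2 = Exn X n (\<lambda>x. (F x)^2)"
    have E2eq: "E2 = (\<Sum>S\<in>Pow {..<n}. (f S)^2)" unfolding E2_def F_def by (rule Parseval)
    have E20: "0 \<le> E2" unfolding E2eq by (intro sum_nonneg) simp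
    have E4: "Exn X n (\<lambda>x. (F x)^4) \<le> \<beta>^(2*d) * E2^2"
    proof -
      have "Exn X n (\<lambda>x. (F x)^4) \<le> (NB \<beta> n f)^2" unfolding F_def by (rule Bonami[OF \<beta>1 \<beta>2])
      also have "\<dots> \<le> (\<beta>^d * E2)^2"
        using NB_le[OF hdeg, of \<beta>] \<beta>3 NB_nonneg[of \<beta> n f] unfolding E2eq
        by (intro power_mono) auto
      also have "\<dots> = \<beta>^(2*d) * E2^2" by (simp add: power_mult_distrib power_mult[symmetric] mult.commute)
      finally show ?thesis .
    qed
    define T where "T = t^2 * (real d)^2"
    have T1: "1 \<le> T"
    proof -
      have a: "1 \<le> t^2" using ht by (simp add: one_le_power)
      have b: "1 \<le> (real d)^2" using d1 by (simp add: one_le_power)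
      have "1 * 1 \<le> t^2 * (real d)^2" by (rule mult_mono[OF a b]) auto
      then show ?thesis unfolding T_def by simp
    qed
    have dT: "real d \<le> T"
    proof -
      have "real d \<le> (real d)^2" using d1 by (simp add: power2_eq_square)
      also have "\<dots> \<le> t^2 * (real d)^2"
      proof -
        have "1 \<le> t^2" using ht by (simp add: one_le_power)
        then show ?thesis using mult_right_mono[of 1 "t^2" "(real d)^2"] by simp
      qed
      finally show ?thesis unfolding T_def .
    qed
    have goal_form: "exp (- C * t^2 * (real d)^2) = exp (- (50 * c + 2 * ln \<beta> + 2) * T)"
      unfolding C_def T_def by (simp add: mult.assoc)
    have bpos: "0 < \<beta>^(2*d)" using \<beta>3 by simp
    show ?thesis
    proof (cases "4 * t^2 \<le> E2")
      case True
      have "9 / (16 * \<beta>^(2*d)) \<le> Q"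
        unfolding Q_def by (rule case_big[OF t0 True[unfolded E2_def] E4[unfolded E2_def] bpos])
      moreover have "exp (- (50 * c + 2 * ln \<beta> + 2) * T) \<le> 9 / (16 * \<beta>^(2*d))"
        using num1[OF T1 dT _ c0] \<beta>3 bpos by (simp add: field_simps)
      ultimately show ?thesis unfolding probQ goal_form by linarith
    next
      case False
      then have E2s: "E2 < 4 * t^2" by simp
      define j where "j = d div 2"
      define mm where "mm = 2 * j + 1"
      have mm_le: "real mm \<le> 2 * real d" unfolding mm_def j_def using d1 by linarith
      have d_le: "d \<le> mm" unfolding mm_def j_def by linarith
      define W where "W = (\<Sum>i<n. (f {i})^2)"
      have W1: "1 \<le> W" using hW unfolding W_def .
      define lam where "lam = 5 * t * real mm / W"
      define \<mu>0 where "\<mu>0 i = lam * f {i}" for i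
      obtain P where Pp: "\<And>s. poly P s = mlpoly n f (\<lambda>i. s * \<mu>0 i)" and Pd: "degree P \<le> d"
        and Pc: "coeff P 1 = (\<Sum>i<n. f {i} * \<mu>0 i)"
        using line_poly[OF hdeg, of \<mu>0] by blast
      have Pc': "coeff P 1 = 5 * t * real mm"
      proof -
        have "coeff P 1 = lam * W" unfolding Pc \<mu>0_def W_def sum_distrib_left
          by (intro sum.cong refl) (simp add: power2_eq_square)
        then show ?thesis unfolding lam_def using W1 by simp
      qed
      obtain s where s1: "-1 \<le> s" "s \<le> 1" and s2: "2 * t \<le> \<bar>poly P s\<bar>"
      proof -
        have "\<exists>s. -1 \<le> s \<and> s \<le> 1 \<and> 2 * t \<le> \<bar>poly P s\<bar>"
        proof (rule ccontr)
          assume "\<not> ?thesis"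
          then have lt: "\<And>x. -1 \<le> x \<Longrightarrow> x \<le> 1 \<Longrightarrow> \<bar>poly P x\<bar> < 2 * t" by force
          define q where "q = smult (1 / (4 * t)) (P - [:coeff P 0:])"
          have qdeg: "degree q \<le> 2 * j + 1"
          proof -
            have "degree q \<le> degree (P - [:coeff P 0:])" unfolding q_def by (rule degree_smult_le)
            also have "\<dots> \<le> d" using Pd by (intro degree_diff_le) auto
            finally show ?thesis using d_le unfolding mm_def by simp
          qed
          have q0: "coeff q 0 = 0" unfolding q_def by simp
          have qb: "\<bar>poly q x\<bar> < 1" if "-1 \<le> x" "x \<le> 1" for x
          proof -
            have eq: "poly q x = (poly P x - poly P 0) / (4 * t)"
              unfolding q_def by (simp add: poly_0_coeff_0)
            have lt4:  "\<bar>poly P x - poly P 0\<bar> < 4 * t"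
            proof -
              have a: "\<bar>poly P x\<bar> < 2 * t" by (rule lt[OF that])
              have b: "\<bar>poly P 0\<bar> < 2 * t" by (rule lt) auto
              have "\<bar>poly P x - poly P 0\<bar> \<le> \<bar>poly P x\<bar> + \<bar>poly P 0\<bar>" by (rule abs_triangle_ineq4)
              then show ?thesis using a b by simp
            qed
            have t4: "0 < 4 * t" using t0 by simp
            have e: "\<bar>poly q x\<bar> = \<bar>poly P x - poly P 0\<bar> / (4 * t)"
              unfolding eq abs_divide using t4 by simp
            show ?thesis unfolding e using lt4 t4 by (simp add: divide_less_eq_1_pos)
          qed
          have "coeff q 1 \<le> 2 * real j + 1" by (rule bernstein0[OF qdeg q0 qb])
          moreover have "coeff q 1 = 5 * real mm / 4"
          proof -
            have c1: "coeff [:coeff P 0:] 1 = 0" using coeff_pCons_Suc[of "coeff P 0" 0 0] by simp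
            have "coeff q 1 = (1 / (4 * t)) * (coeff P 1 - coeff [:coeff P 0:] 1)"
              unfolding q_def by (simp only: coeff_smult coeff_diff)
            also have "\<dots> = (1 / (4 * t)) * (5 * t * real mm)" unfolding c1 Pc' by simp
            also have "\<dots> = 5 * real mm / 4" using t0 by simp
            finally show ?thesis .
          qed
          ultimately show False unfolding mm_def by simp
        qed
        then show ?thesis using that by blast
      qed
      define \<mu> where "\<mu> i = s * \<mu>0 i" for i
      have mu_small: "\<bar>\<mu> i\<bar> \<le> 1 / M" if "i < n" for i
      proof -
        have "\<bar>\<mu> i\<bar> \<le> \<bar>\<mu>0 i\<bar>" unfolding \<mu>_def using s1 by (simp add: abs_mult mult_left_le_one_le)
        also have "\<dots> = lam * \<bar>f {i}\<bar>" unfolding \<mu>0_def lam_def using t0 W1 by (simp add: abs_mult)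
        also have "\<dots> \<le> lam * (1 / (K * t * real d))"
          using hsmall that t0 W1 unfolding lam_def by (intro mult_left_mono) auto
        also have "\<dots> = 5 * real mm / (W * K * real d)" unfolding lam_def using t0 by (simp add: field_simps)
        also have "\<dots> \<le> 5 * (2 * real d) / (1 * K * real d)"
          using mm_le W1 K0 d1 by (intro frac_le mult_right_mono mult_pos_pos) auto
        also have "\<dots> = 1 / M" unfolding K_def using d1 M1 by (simp add: field_simps)
        finally show ?thesis .
      qed
      have mu1: "\<bar>\<mu> i\<bar> \<le> 1" if "i < n" for i
        using mu_small[OF that] M1 by (smt (verit) divide_le_eq_1_pos)
      have musum: "(\<Sum>i<n. (\<mu> i)^2) \<le> 100 * T"
      proof -
        have "(\<Sum>i<n. (\<mu> i)^2) \<le> (\<Sum>i<n. lam^2 * (f {i})^2)"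
        proof (intro sum_mono)
          fix i
          have "(\<mu> i)^2 = s^2 * (lam^2 * (f {i})^2)" unfolding \<mu>_def \<mu>0_def by (simp add: power_mult_distrib)
          also have "\<dots> \<le> 1 * (lam^2 * (f {i})^2)"
            using s1 by (intro mult_right_mono) (auto simp: abs_square_le_1)
          finally show "(\<mu> i)^2 \<le> lam^2 * (f {i})^2" by simp
        qed
        also have "\<dots> = lam^2 * W" unfolding W_def sum_distrib_left ..
        also have "\<dots> = 25 * t^2 * (real mm)^2 / W" unfolding lam_def using W1 by (simp add: field_simps power2_eq_square)
        also have "\<dots> \<le> 25 * t^2 * (real mm)^2" using divide_left_mono[of 1 W "25 * t^2 * (real mm)^2"] W1 by simp
        also have "\<dots> \<le> 25 * t^2 * (2 * real d)^2" using mm_le by (intro mult_left_mono power_mono) auto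
        also have "\<dots> = 100 * T" unfolding T_def by (simp add: power_mult_distrib)
        finally show ?thesis .
      qed
      define w where "w x = (\<Prod>i<n. 1 + \<mu> i * x i)" for x :: "nat \<Rightarrow> real"
      have wnn: "0 \<le> w x" if "x \<in> DD n (set_pmf X)" for x
        unfolding w_def
      proof (intro prod_nonneg)
        fix i assume i: "i \<in> {..<n}"
        then have xi: "x i \<in> set_pmf X" using that unfolding DD_def PiE_dflt_def by auto
        have "\<bar>\<mu> i * x i\<bar> \<le> (1 / M) * M"
          unfolding abs_mult using mu_small[of i] hV[OF xi] i M1 by (intro mult_mono) auto
        then have "\<bar>\<mu> i * x i\<bar> \<le> 1" using M1 by simp
        then show "0 \<le> 1 + \<mu> i * x i" by linarith
      qed
      have w1: "Exn X n w = 1" unfolding w_def by (rule Ex_tilt_one)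
      have EF: "Exn X n (\<lambda>x. F x * w x) = poly P s"
        unfolding F_def w_def Ex_mlpoly_tilt Pp \<mu>_def ..
      have key: "t^4 \<le> Exn X n (\<lambda>x. (F x)^4) * Exn X n (\<lambda>x. (w x)^4) * Q^2"
      proof -
        have EF2: "2 * t \<le> \<bar>Exn X n (\<lambda>x. F x * w x)\<bar>" unfolding EF by (rule s2)
        show ?thesis unfolding Q_def by (rule case_tilt[OF t0 wnn w1 EF2])
      qed
      have Ew4: "Exn X n (\<lambda>x. (w x)^4) \<le> exp (100 * c * T)"
      proof -
        have "Exn X n (\<lambda>x. (w x)^4) \<le> exp (c * (\<Sum>i<n. (\<mu> i)^2))"
          unfolding w_def c_def by (rule Ex_w4_bound) (use mu1 in auto)
        also have "\<dots> \<le> exp (c * (100 * T))" using musum c0 by (simp add: mult_left_mono)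
        finally show ?thesis by (simp add: mult_ac)
      qed
      have w40: "0 \<le> Exn X n (\<lambda>x. (w x)^4)" by (intro Ex_nonneg) (simp add: zero_le_even_power)
      have E2sq: "E2^2 \<le> 16 * t^4"
      proof -
        have "E2^2 \<le> (4 * t^2)^2" using E20 E2s by (intro power_mono) auto
        then show ?thesis by (simp add: power_mult_distrib power_mult[symmetric])
      qed
      have "t^4 \<le> (\<beta>^(2*d) * (16 * t^4)) * exp (100 * c * T) * Q^2"
      proof -
        have "Exn X n (\<lambda>x. (F x)^4) \<le> \<beta>^(2*d) * (16 * t^4)"
          using E4 E2sq bpos by (smt (verit) mult_left_mono)
        moreover have "0 \<le> Exn X n (\<lambda>x. (F x)^4)" by (intro Ex_nonneg) (simp add: zero_le_even_power)
        ultimately have "Exn X n (\<lambda>x. (F x)^4) * Exn X n (\<lambda>x. (w x)^4) \<le> (\<beta>^(2*d) * (16 * t^4)) * exp (100 * c * T)"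
          using Ew4 w40 by (intro mult_mono) auto
        then show ?thesis using key by (smt (verit) mult_right_mono zero_le_power2)
      qed
      then have one: "1 \<le> 16 * \<beta>^(2*d) * exp (100 * c * T) * Q^2"
        using t0 by (simp add: mult_ac)
      define e where "e = exp (- (50 * c + 2 * ln \<beta> + 2) * T)"
      have n2: "16 * \<beta>^(2*d) * exp (100 * c * T) * e^2 \<le> 1"
        unfolding e_def by (rule num2[OF T1 dT _ c0]) (use \<beta>3 in simp)
      have pos: "0 < 16 * \<beta>^(2*d) * exp (100 * c * T)" using bpos by simp
      have "e^2 \<le> Q^2"
      proof -
        have "16 * \<beta>^(2*d) * exp (100 * c * T) * e^2 \<le> 16 * \<beta>^(2*d) * exp (100 * c * T) * Q^2"
          using n2 one by linarith
        then show ?thesis using pos by (simp add: mult_le_cancel_left_pos)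
      qed
      then have "e \<le> Q" using Q0 by (rule power2_le_imp_le)
      then show ?thesis unfolding probQ goal_form e_def .
    qed
  qed
  show ?thesis
    by (intro exI[of _ K] exI[of _ C] conjI K0 C0 allI impI main) auto
qed


end
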